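(* Let $k\ge2$, $\omega>0$, $\chi>0$, and let $a_1,\dots,a_k$ be periodic functions $a_l(t)=\sum_{m\in\mathbb{Z}}A^{(l)}(m)e^{im\omega t}$ whose Fourier coefficients satisfy $|A^{(l)}(m)|\le\alpha_l\frac{e^{-\chi|m|}}{\langle m\rangle^2}$ for all $m\in\mathbb{Z}$ and $l=1,\dots,k$, where $\alpha_l>0$. Then there is a positive constant $\beta_k$ such that the Fourier coefficients $\mathcal{R}_k(a_1|\cdots|a_k)(m)$, $m\in\mathbb{Z}$, of $\mathcal{R}_k(a_1|\cdots|a_k)_t$ satisfy $$|\mathcal{R}_k(a_1|\cdots|a_k)(m)|\le\beta_k\,\alpha_1\cdots\alpha_k\,\frac{e^{-\chi|m|}}{\langle m\rangle^2}.$$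
   Context: $\langle m\rangle:=|m|$ for $m\neq0$, $\langle0\rangle:=1$. For periodic (quasi-periodic) $h$, $M(h)=\lim_{T\to\infty}\frac1{2T}\int_{-T}^Th(t)dt$. Notation $(f|g)_t:=f(t)\int_0^tg(\tau)d\tau$. Renormalisation operators: $\mathcal{R}_1a_1:=a_1$; $\mathcal{R}_2(a_1|a_2)_t:=a_1(t)\int_0^t(a_2(\tau)-M(a_2))d\tau$; for $n>2$, $\mathcal{R}_n(a_1|\cdots|a_n)_t:=\left(a_1\,\big|\,\mathcal{R}_{n-1}(a_2|\cdots|a_n)-M(\mathcal{R}_{n-1}(a_2|\cdots|a_n))\right)_t$; these are periodic with frequency $\omega$ when the $a_l$ are. *)

theory Defs
  imports "HOL-Analysis.Analysis"
begin

definition angle_br :: "int \<Rightarrow> real" where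
  "angle_br m = (if m = 0 then 1 else real_of_int \<bar>m\<bar>)"

definition fourier_series :: "real \<Rightarrow> (int \<Rightarrow> complex) \<Rightarrow> real \<Rightarrow> complex" where
  "fourier_series \<omega> A t = (\<Sum>\<^sub>\<infinity>m\<in>(UNIV::int set). A m * exp (\<i> * of_int m * of_real \<omega> * of_real t))"

definition fourier_coeff :: "real \<Rightarrow> (real \<Rightarrow> complex) \<Rightarrow> int \<Rightarrow> complex" where
  "fourier_coeff \<omega> h m =
     of_real (\<omega> / (2 * pi)) * integral {0..2 * pi / \<omega>} (\<lambda>t. h t * exp (- \<i> * of_int m * of_real \<omega> * of_real t))"

definition mean_val :: "(real \<Rightarrow> complex) \<Rightarrow> complex" where
  "mean_val h = Lim at_top (\<lambda>T. integral {-T..T} h / of_real (2 * T))"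

definition oint :: "real \<Rightarrow> real \<Rightarrow> (real \<Rightarrow> complex) \<Rightarrow> complex" where
  "oint a b f = (if a \<le> b then integral {a..b} f else - integral {b..a} f)"

text \<open>Renormalisation operator R_n(a_1|...|a_n), for the list [a_1,...,a_n].
  R_1 a = a; R_n(a_1|rest) = (a_1 | R_{n-1}(rest) - M(R_{n-1}(rest))).
  (For n = 2 this is exactly the definition of R_2.)  The empty list is unused.\<close>
fun renorm :: "(real \<Rightarrow> complex) list \<Rightarrow> real \<Rightarrow> complex" where
  "renorm [] = (\<lambda>t. 0)"
| "renorm [a] = a"
| "renorm (a # b # rest) =
     (\<lambda>t. a t * oint 0 t (\<lambda>\<tau>. renorm (b # rest) \<tau> - mean_val (renorm (b # rest))))"

end

theory Submission
  imports Defs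
begin


definition ef :: "real \<Rightarrow> int \<Rightarrow> real \<Rightarrow> complex" where
  "ef \<omega> m t = exp (\<i> * of_int m * of_real \<omega> * of_real t)"

lemma fs_ef: "fourier_series \<omega> A t = (\<Sum>\<^sub>\<infinity>m. A m * ef \<omega> m t)"
  by (simp add: fourier_series_def ef_def)

lemma norm_ef [simp]: "norm (ef \<omega> m t) = 1"
  unfolding ef_def by (simp add: norm_exp_eq_Re)

lemma ef_mult: "ef \<omega> m t * ef \<omega> n t = ef \<omega> (m + n) t"
  unfolding ef_def by (simp add: exp_add[symmetric] algebra_simps)

lemma ef_0 [simp]: "ef \<omega> 0 t = 1" "ef \<omega> m 0 = 1"
  unfolding ef_def by simp_all

lemma ef_period: assumes "\<omega> \<noteq> 0" shows "ef \<omega> m (2 * pi / \<omega>) = 1"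
proof -
  have "\<i> * of_int m * of_real \<omega> * of_real (2 * pi / \<omega>) = (2 * of_int m * pi) * \<i>"
    using assms by (simp add: field_simps)
  then show ?thesis unfolding ef_def using exp_integer_2pi[of "of_int m"] by simp
qed

lemma cont_ef [continuous_intros]: "continuous_on S (ef \<omega> m)"
  unfolding ef_def by (intro continuous_intros)

lemma ef_deriv: "(ef \<omega> m has_vector_derivative (\<i> * of_int m * of_real \<omega> * ef \<omega> m t)) (at t within S)"
proof -
  have "((\<lambda>z. exp (\<i> * of_int m * of_real \<omega> * z)) has_field_derivative
        (\<i> * of_int m * of_real \<omega> * exp (\<i> * of_int m * of_real \<omega> * of_real t))) (at (of_real t))"
    by (auto intro!: derivative_eq_intros)
  from has_vector_derivative_real_field[OF this] show ?thesis unfolding ef_def by simp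
qed

lemma ef_integral:
  assumes "m \<noteq> 0" "\<omega> \<noteq> 0" "a \<le> b"
  shows "(ef \<omega> m has_integral ((ef \<omega> m b - ef \<omega> m a) / (\<i> * of_int m * of_real \<omega>))) {a..b}"
proof -
  let ?c = "\<i> * of_int m * of_real \<omega>"
  have c: "?c \<noteq> 0" using assms by simp
  have "((\<lambda>z. exp (?c * z) / ?c) has_field_derivative
        exp (?c * of_real t)) (at (of_real t))" for t
    using c by (auto intro!: derivative_eq_intros)
  from has_vector_derivative_real_field[OF this]
  have "((\<lambda>t. ef \<omega> m t / ?c) has_vector_derivative ef \<omega> m t) (at t within {a..b})" for t
    unfolding ef_def by simp
  from fundamental_theorem_of_calculus[OF assms(3) this]
  show ?thesis by (simp add: diff_divide_distrib)
qed



lemma tail_bound: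
  fixes g :: "int \<Rightarrow> complex" and M :: "int \<Rightarrow> real"
  assumes M: "M summable_on UNIV" and bound: "\<And>m. norm (g m) \<le> M m" and Y: "finite Y"
  shows "norm ((\<Sum>\<^sub>\<infinity>m. g m) - sum g Y) \<le> (\<Sum>\<^sub>\<infinity>m. M m) - sum M Y"
proof -
  have gs: "g summable_on UNIV"
  proof -
    have "(\<lambda>m. norm (g m)) summable_on UNIV"
      by (rule summable_on_comparison_test[OF M]) (use bound in auto)
    then show ?thesis by (rule abs_summable_summable)
  qed
  have g1: "(g has_sum (\<Sum>\<^sub>\<infinity>m\<in>UNIV - Y. g m)) (UNIV - Y)"
    using summable_on_subset_banach[OF gs] by (simp add: has_sum_infsum)
  have g2: "(g has_sum sum g Y) Y" using Y by simp
  from has_sum_Un_disjoint[OF g1 g2] have "(g has_sum ((\<Sum>\<^sub>\<infinity>m\<in>UNIV - Y. g m) + sum g Y)) UNIV"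
    by (simp add: Un_commute Int_commute)
  then have e1: "(\<Sum>\<^sub>\<infinity>m. g m) - sum g Y = (\<Sum>\<^sub>\<infinity>m\<in>UNIV - Y. g m)"
    by (simp add: infsumI)
  have Ms: "M summable_on (UNIV - Y)" using M summable_on_subset by blast
  have M1: "(M has_sum (\<Sum>\<^sub>\<infinity>m\<in>UNIV - Y. M m)) (UNIV - Y)"
    using Ms by (simp add: has_sum_infsum)
  have M2: "(M has_sum sum M Y) Y" using Y by simp
  from has_sum_Un_disjoint[OF M1 M2] have "(M has_sum ((\<Sum>\<^sub>\<infinity>m\<in>UNIV - Y. M m) + sum M Y)) UNIV"
    by (simp add: Un_commute Int_commute)
  then have e2: "(\<Sum>\<^sub>\<infinity>m. M m) - sum M Y = (\<Sum>\<^sub>\<infinity>m\<in>UNIV - Y. M m)"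
    by (simp add: infsumI)
  show ?thesis unfolding e1 e2
    by (rule norm_infsum_le[OF g1 M1]) (use bound in auto)
qed

lemma series_uniform:
  fixes g :: "int \<Rightarrow> real \<Rightarrow> complex" and M :: "int \<Rightarrow> real"
  assumes M: "M summable_on UNIV" and bound: "\<And>m t. norm (g m t) \<le> M m"
  shows "uniform_limit S (\<lambda>X t. \<Sum>m\<in>X. g m t) (\<lambda>t. \<Sum>\<^sub>\<infinity>m. g m t) (finite_subsets_at_top UNIV)"
  unfolding uniform_limit_iff
proof (intro allI impI)
  fix e :: real assume e: "e > 0"
  have "(sum M \<longlongrightarrow> (\<Sum>\<^sub>\<infinity>m. M m)) (finite_subsets_at_top UNIV)"
    using has_sum_infsum[OF M] unfolding has_sum_def .
  then have "\<forall>\<^sub>F X in finite_subsets_at_top UNIV. dist (sum M X) (\<Sum>\<^sub>\<infinity>m. M m) < e"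
    using e by (rule tendstoD)
  then obtain X0 where X0: "finite X0" "\<And>Y. finite Y \<Longrightarrow> X0 \<subseteq> Y \<Longrightarrow> dist (sum M Y) (\<Sum>\<^sub>\<infinity>m. M m) < e"
    unfolding eventually_finite_subsets_at_top by auto
  show "\<forall>\<^sub>F X in finite_subsets_at_top UNIV. \<forall>t\<in>S. dist (\<Sum>m\<in>X. g m t) (\<Sum>\<^sub>\<infinity>m. g m t) < e"
    unfolding eventually_finite_subsets_at_top
  proof (rule exI[of _ X0], intro conjI allI impI ballI)
    show "finite X0" by fact
    show "X0 \<subseteq> UNIV" by simp
    fix Y t assume Y: "finite Y \<and> X0 \<subseteq> Y \<and> Y \<subseteq> UNIV"
    have "dist (\<Sum>m\<in>Y. g m t) (\<Sum>\<^sub>\<infinity>m. g m t) = norm ((\<Sum>\<^sub>\<infinity>m. g m t) - (\<Sum>m\<in>Y. g m t))"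
      by (simp add: dist_norm norm_minus_commute)
    also have "\<dots> \<le> (\<Sum>\<^sub>\<infinity>m. M m) - sum M Y"
      using tail_bound[OF M, of "\<lambda>m. g m t" Y] bound Y by auto
    also have "\<dots> < e" using X0(2)[of Y] Y by (simp add: dist_real_def)
    finally show "dist (\<Sum>m\<in>Y. g m t) (\<Sum>\<^sub>\<infinity>m. g m t) < e" .
  qed
qed

lemma series_cont:
  fixes g :: "int \<Rightarrow> real \<Rightarrow> complex" and M :: "int \<Rightarrow> real"
  assumes M: "M summable_on UNIV" and bound: "\<And>m t. norm (g m t) \<le> M m"
    and c: "\<And>m. continuous_on UNIV (g m)"
  shows "continuous_on S (\<lambda>t. \<Sum>\<^sub>\<infinity>m. g m t)"
proof -
  have "continuous_on UNIV (\<lambda>t. \<Sum>\<^sub>\<infinity>m. g m t)"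
    by (rule uniform_limit_theorem[OF _ series_uniform[OF M bound]])
       (auto intro!: always_eventually continuous_on_sum c)
  then show ?thesis using continuous_on_subset by blast
qed

lemma series_integral:
  fixes g :: "int \<Rightarrow> real \<Rightarrow> complex" and M :: "int \<Rightarrow> real"
  assumes M: "M summable_on UNIV" and bound: "\<And>m t. norm (g m t) \<le> M m"
    and c: "\<And>m. continuous_on UNIV (g m)"
  shows "((\<lambda>m. integral {a..b} (g m)) has_sum integral {a..b} (\<lambda>t. \<Sum>\<^sub>\<infinity>m. g m t)) UNIV"
proof -
  have u: "uniform_limit {a..b} (\<lambda>X t. \<Sum>m\<in>X. g m t) (\<lambda>t. \<Sum>\<^sub>\<infinity>m. g m t) (finite_subsets_at_top UNIV)"
    by (rule series_uniform[OF M]) (rule bound)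
  obtain I J where I: "\<And>X. ((\<lambda>t. \<Sum>m\<in>X. g m t) has_integral I X) {a..b}"
    and J: "((\<lambda>t. \<Sum>\<^sub>\<infinity>m. g m t) has_integral J) {a..b}"
    and lim: "(I \<longlongrightarrow> J) (finite_subsets_at_top UNIV)"
    by (rule uniform_limit_integral[OF u])
       (auto intro!: continuous_on_sum continuous_on_subset[OF c])
  have IX: "I X = (\<Sum>m\<in>X. integral {a..b} (g m))" if "finite X" for X
  proof -
    have "I X = integral {a..b} (\<lambda>t. \<Sum>m\<in>X. g m t)" using I[of X] by (rule integral_unique[symmetric])
    also have "\<dots> = (\<Sum>m\<in>X. integral {a..b} (g m))"
      by (rule integral_sum) (auto intro!: integrable_continuous_interval continuous_on_subset[OF c] that)
    finally show ?thesis .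
  qed
  have "((\<lambda>X. \<Sum>m\<in>X. integral {a..b} (g m)) \<longlongrightarrow> J) (finite_subsets_at_top UNIV)"
    by (rule Lim_transform_eventually[OF lim]) (auto intro: eventually_finite_subsets_at_top_weakI IX)
  then show ?thesis using integral_unique[OF J] unfolding has_sum_def by simp
qed



definition Gs :: "real \<Rightarrow> (int \<Rightarrow> complex) \<Rightarrow> real \<Rightarrow> complex" where
  "Gs \<omega> B t = (\<Sum>\<^sub>\<infinity>m. (if m = 0 then 0 else B m / (\<i> * of_int m * of_real \<omega>)) * ef \<omega> m t)"

lemma abs_sum_summable:
  fixes f :: "int \<Rightarrow> complex"
  assumes "(\<lambda>m. norm (B m)) summable_on UNIV" "\<And>m. norm (f m) \<le> norm (B m)"
  shows "f summable_on UNIV"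
proof -
  have "(\<lambda>m. norm (f m)) summable_on UNIV"
    by (rule summable_on_comparison_test[OF assms(1)]) (use assms(2) in auto)
  then show ?thesis by (rule abs_summable_summable)
qed

lemma fs_has_sum:
  assumes "(\<lambda>m. norm (B m)) summable_on UNIV"
  shows "((\<lambda>m. B m * ef \<omega> m t) has_sum fourier_series \<omega> B t) UNIV"
proof -
  have "(\<lambda>m. B m * ef \<omega> m t) summable_on UNIV"
    by (rule abs_sum_summable[OF assms]) (simp add: norm_mult)
  then show ?thesis unfolding fs_ef by (rule has_sum_infsum)
qed

lemma fs_cont:
  assumes "(\<lambda>m. norm (B m)) summable_on UNIV"
  shows "continuous_on S (fourier_series \<omega> B)"
proof -
  have "continuous_on S (\<lambda>t. \<Sum>\<^sub>\<infinity>m. B m * ef \<omega> m t)"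
    by (rule series_cont[OF assms]) (auto simp: norm_mult intro!: continuous_intros)
  then show ?thesis unfolding fs_ef[abs_def] .
qed

lemma Gcoef_bound:
  assumes "\<omega> > 0"
  shows "norm (if m = 0 then 0 else B m / (\<i> * of_int m * of_real \<omega>)) \<le> norm (B m) / \<omega>"
proof (cases "m = 0")
  case False
  then have "\<omega> \<le> \<bar>real_of_int m\<bar> * \<omega>" using assms by (simp add: mult_le_cancel_right1 del: of_int_abs)
  then have "norm (B m) / (\<bar>real_of_int m\<bar> * \<omega>) \<le> norm (B m) / \<omega>"
    using assms False by (intro divide_left_mono) auto
  with False assms show ?thesis by (simp add: norm_divide norm_mult)
qed (use assms in auto)

lemma Gs_has_sum:
  assumes "\<omega> > 0" "(\<lambda>m. norm (B m)) summable_on UNIV"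
  shows "((\<lambda>m. (if m = 0 then 0 else B m / (\<i> * of_int m * of_real \<omega>)) * ef \<omega> m t) has_sum Gs \<omega> B t) UNIV"
proof -
  have s: "(\<lambda>m. norm (B m) / \<omega>) summable_on UNIV"
    using summable_on_cmult_left[OF assms(2), of "1/\<omega>"] by simp
  have "(\<lambda>m. (if m = 0 then 0 else B m / (\<i> * of_int m * of_real \<omega>)) * ef \<omega> m t) summable_on UNIV"
  proof -
    have "(\<lambda>m. norm ((if m = 0 then 0 else B m / (\<i> * of_int m * of_real \<omega>)) * ef \<omega> m t)) summable_on UNIV"
      by (rule summable_on_comparison_test[OF s]) (use Gcoef_bound[OF assms(1)] in \<open>auto simp: norm_mult\<close>)
    then show ?thesis by (rule abs_summable_summable)
  qed
  then show ?thesis unfolding Gs_def by (rule has_sum_infsum)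
qed

lemma has_sum_pt: "((\<lambda>m. if m = a then c else (0::'b::{comm_monoid_add,t2_space})) has_sum c) UNIV"
proof -
  have 1: "((\<lambda>m. if m = a then c else (0::'b)) has_sum c) {a}"
    using has_sum_finite[of "{a}" "\<lambda>m. if m = a then c else (0::'b)"] by simp
  show ?thesis
    by (rule has_sum_cong_neutral[where T="{a}", THEN iffD2, OF _ _ _ 1]) auto
qed

lemma fs_integral:
  assumes w: "\<omega> > 0" and B: "(\<lambda>m. norm (B m)) summable_on UNIV" and ab: "a \<le> b"
  shows "integral {a..b} (fourier_series \<omega> B) = of_real (b - a) * B 0 + Gs \<omega> B b - Gs \<omega> B a"
proof -
  let ?g = "\<lambda>m t. B m * ef \<omega> m t"
  have h1: "((\<lambda>m. integral {a..b} (?g m)) has_sum integral {a..b} (\<lambda>t. \<Sum>\<^sub>\<infinity>m. ?g m t)) UNIV"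
    by (rule series_integral[OF B]) (auto simp: norm_mult intro!: continuous_intros)
  have e1: "(\<lambda>t. \<Sum>\<^sub>\<infinity>m. ?g m t) = fourier_series \<omega> B" by (simp add: fs_ef[abs_def])
  let ?c = "\<lambda>m. (if m = 0 then 0 else B m / (\<i> * of_int m * of_real \<omega>))"
  have e2: "integral {a..b} (?g m) = (if m = 0 then of_real (b - a) * B 0 else 0)
              + (?c m * ef \<omega> m b + - (?c m * ef \<omega> m a))" for m
  proof (cases "m = 0")
    case True
    then show ?thesis using ab by (simp add: scaleR_conv_of_real)
  next
    case False
    have "integral {a..b} (?g m) = B m * integral {a..b} (ef \<omega> m)" by simp
    also have "\<dots> = B m * ((ef \<omega> m b - ef \<omega> m a) / (\<i> * of_int m * of_real \<omega>))"
      using integral_unique[OF ef_integral[OF False _ ab, of \<omega>]] w by simp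
    finally show ?thesis using False by (simp add: add_divide_distrib[symmetric] diff_divide_distrib algebra_simps)
  qed
  have h2: "((\<lambda>m. integral {a..b} (?g m)) has_sum (of_real (b - a) * B 0 + (Gs \<omega> B b + - Gs \<omega> B a))) UNIV"
    unfolding e2
    by (intro has_sum_add has_sum_pt has_sum_uminusI Gs_has_sum w B)
  show ?thesis using has_sum_unique[OF h1 h2] e1 by simp
qed

lemma Gs_bound:
  assumes w: "\<omega> > 0" and B: "(\<lambda>m. norm (B m)) summable_on UNIV"
  shows "norm (Gs \<omega> B t) \<le> (\<Sum>\<^sub>\<infinity>m. norm (B m)) / \<omega>"
proof (rule norm_infsum_le[OF Gs_has_sum[OF w B]])
  show "((\<lambda>m. norm (B m) / \<omega>) has_sum (\<Sum>\<^sub>\<infinity>m. norm (B m)) / \<omega>) UNIV"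
    using has_sum_cmult_left[OF has_sum_infsum[OF B], of "1/\<omega>"] by simp
  show "norm ((if m = 0 then 0 else B m / (\<i> * of_int m * of_real \<omega>)) * ef \<omega> m t) \<le> norm (B m) / \<omega>" for m
    using Gcoef_bound[OF w, of m B] by (simp add: norm_mult)
qed

lemma fs_mean:
  assumes w: "\<omega> > 0" and B: "(\<lambda>m. norm (B m)) summable_on UNIV"
  shows "mean_val (fourier_series \<omega> B) = B 0"
proof -
  define K where "K = (\<Sum>\<^sub>\<infinity>m. norm (B m)) / \<omega>"
  let ?f = "\<lambda>T. integral {-T..T} (fourier_series \<omega> B) / of_real (2 * T)"
  have ev: "\<forall>\<^sub>F T in at_top. B 0 + (Gs \<omega> B T - Gs \<omega> B (-T)) / of_real (2 * T) = ?f T"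
  proof (rule eventually_at_top_linorderI[of 1])
    fix T :: real assume T: "T \<ge> 1"
    have "integral {-T..T} (fourier_series \<omega> B) = of_real (2 * T) * B 0 + Gs \<omega> B T - Gs \<omega> B (-T)"
      using fs_integral[OF w B, of "-T" T] T by simp
    then show "B 0 + (Gs \<omega> B T - Gs \<omega> B (-T)) / of_real (2 * T) = ?f T"
      using T by (simp add: field_simps)
  qed
  have z: "((\<lambda>T. (Gs \<omega> B T - Gs \<omega> B (-T)) / of_real (2 * T)) \<longlongrightarrow> 0) at_top"
  proof (rule Lim_null_comparison)
    show "\<forall>\<^sub>F T in at_top. norm ((Gs \<omega> B T - Gs \<omega> B (-T)) / of_real (2 * T)) \<le> K * inverse T"
    proof (rule eventually_at_top_linorderI[of 1])
      fix T :: real assume T: "T \<ge> 1"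
      have "norm (Gs \<omega> B T - Gs \<omega> B (-T)) \<le> 2 * K"
        using norm_triangle_ineq4[of "Gs \<omega> B T" "Gs \<omega> B (-T)"] Gs_bound[OF w B, of T] Gs_bound[OF w B, of "-T"]
        unfolding K_def by linarith
      then show "norm ((Gs \<omega> B T - Gs \<omega> B (-T)) / of_real (2 * T)) \<le> K * inverse T"
        using T by (simp add: norm_divide divide_simps) 
    qed
    show "((\<lambda>T. K * inverse T) \<longlongrightarrow> 0) at_top"
      by (intro tendsto_mult_right_zero tendsto_inverse_0_at_top filterlim_ident)
  qed
  have "(?f \<longlongrightarrow> B 0 + 0) at_top"
    by (rule Lim_transform_eventually[OF tendsto_add[OF tendsto_const z] ev])
  then show ?thesis unfolding mean_val_def by (intro tendsto_Lim) simp_all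
qed

lemma fs_oint:
  assumes w: "\<omega> > 0" and B: "(\<lambda>m. norm (B m)) summable_on UNIV"
  shows "oint 0 t (\<lambda>\<tau>. fourier_series \<omega> B \<tau> - B 0) = Gs \<omega> B t - Gs \<omega> B 0"
proof -
  have int: "integral {a..b} (\<lambda>\<tau>. fourier_series \<omega> B \<tau> - B 0) = Gs \<omega> B b - Gs \<omega> B a" if "a \<le> b" for a b
  proof -
    have "integral {a..b} (\<lambda>\<tau>. fourier_series \<omega> B \<tau> - B 0)
          = integral {a..b} (fourier_series \<omega> B) - integral {a..b} (\<lambda>\<tau>. B 0)"
      by (rule integral_diff) (auto intro!: integrable_continuous_interval fs_cont[OF B])
    also have "\<dots> = Gs \<omega> B b - Gs \<omega> B a"
      using fs_integral[OF w B that] that by (simp add: scaleR_conv_of_real)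
    finally show ?thesis .
  qed
  show ?thesis
  proof (cases "0 \<le> t")
    case True then show ?thesis using int[of 0 t] by (simp add: oint_def)
  next
    case False then show ?thesis using int[of t 0] by (simp add: oint_def)
  qed
qed

definition Dco :: "real \<Rightarrow> (int \<Rightarrow> complex) \<Rightarrow> int \<Rightarrow> complex" where
  "Dco \<omega> B m = (if m = 0 then - Gs \<omega> B 0 else B m / (\<i> * of_int m * of_real \<omega>))"

lemma Dco_fs:
  assumes w: "\<omega> > 0" and B: "(\<lambda>m. norm (B m)) summable_on UNIV"
  shows "fourier_series \<omega> (Dco \<omega> B) t = Gs \<omega> B t - Gs \<omega> B 0"
proof -
  have "((\<lambda>m. (if m = 0 then - Gs \<omega> B 0 else 0) + (if m = 0 then 0 else B m / (\<i> * of_int m * of_real \<omega>)) * ef \<omega> m t)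
        has_sum (- Gs \<omega> B 0 + Gs \<omega> B t)) UNIV"
    by (intro has_sum_add has_sum_pt Gs_has_sum w B)
  moreover have "(\<lambda>m. (if m = 0 then - Gs \<omega> B 0 else 0) + (if m = 0 then 0 else B m / (\<i> * of_int m * of_real \<omega>)) * ef \<omega> m t)
     = (\<lambda>m. Dco \<omega> B m * ef \<omega> m t)"
    by (auto simp: Dco_def)
  ultimately show ?thesis unfolding fs_ef by (simp add: infsumI)
qed

lemma fs_coeff:
  assumes w: "\<omega> > 0" and C: "(\<lambda>m. norm (C m)) summable_on UNIV"
  shows "fourier_coeff \<omega> (fourier_series \<omega> C) m = C m"
proof -
  define C' where "C' n = C (n + m)" for n
  have bij: "bij_betw (\<lambda>n. n + m) UNIV UNIV"
    by (rule bij_betw_byWitness[where f'="\<lambda>n. n - m"]) auto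
  have C': "(\<lambda>n. norm (C' n)) summable_on UNIV"
    unfolding C'_def using summable_on_reindex_bij_betw[OF bij, of "\<lambda>n. norm (C n)"] C by simp
  have eq: "fourier_series \<omega> C t * exp (- \<i> * of_int m * of_real \<omega> * of_real t) = fourier_series \<omega> C' t" for t
  proof -
    have "fourier_series \<omega> C t * exp (- \<i> * of_int m * of_real \<omega> * of_real t)
        = (\<Sum>\<^sub>\<infinity>n. C n * ef \<omega> n t * ef \<omega> (-m) t)"
      unfolding fs_ef by (subst infsum_cmult_left') (simp add: ef_def)
    also have "\<dots> = (\<Sum>\<^sub>\<infinity>n. C n * ef \<omega> (n - m) t)"
      by (simp add: mult.assoc ef_mult)
    also have "\<dots> = (\<Sum>\<^sub>\<infinity>n. C' n * ef \<omega> n t)"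
      unfolding C'_def using infsum_reindex_bij_betw[OF bij, of "\<lambda>n. C n * ef \<omega> (n - m) t"] by simp
    finally show ?thesis unfolding fs_ef .
  qed
  have P: "2 * pi / \<omega> \<ge> 0" using w by simp
  have G: "Gs \<omega> C' (2 * pi / \<omega>) = Gs \<omega> C' 0"
    unfolding Gs_def using ef_period[of \<omega>] w by simp
  have "fourier_coeff \<omega> (fourier_series \<omega> C) m = of_real (\<omega> / (2 * pi)) * integral {0..2 * pi / \<omega>} (fourier_series \<omega> C')"
    unfolding fourier_coeff_def eq ..
  also have "\<dots> = of_real (\<omega> / (2 * pi)) * (of_real (2 * pi / \<omega>) * C' 0)"
    using fs_integral[OF w C' P] G by simp
  also have "\<dots> = C m" using w by (simp add: C'_def field_simps)
  finally show ?thesis .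
qed



lemma fs_mult:
  assumes A: "(\<lambda>m. norm (A m)) summable_on UNIV" and D: "(\<lambda>m. norm (D m)) summable_on UNIV"
  shows "fourier_series \<omega> A t * fourier_series \<omega> D t = fourier_series \<omega> (\<lambda>m. \<Sum>\<^sub>\<infinity>q. A (m - q) * D q) t"
proof -
  define f where "f = (\<lambda>(p, q). A p * ef \<omega> p t * (D q * ef \<omega> q t))"
  have ns: "(\<lambda>(p, q). norm (A p) * norm (D q)) summable_on (UNIV \<times> UNIV)"
  proof (rule summable_on_SigmaI[where g="\<lambda>p. norm (A p) * (\<Sum>\<^sub>\<infinity>q. norm (D q))"])
    show "((\<lambda>q. case (p, q) of (p, q) \<Rightarrow> norm (A p) * norm (D q)) has_sum norm (A p) * (\<Sum>\<^sub>\<infinity>q. norm (D q))) UNIV" for p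
      using has_sum_cmult_right[OF has_sum_infsum[OF D], of "norm (A p)"] by simp
    show "(\<lambda>p. norm (A p) * (\<Sum>\<^sub>\<infinity>q. norm (D q))) summable_on UNIV"
      by (rule summable_on_cmult_left[OF A])
  qed auto
  have fs: "f summable_on (UNIV \<times> UNIV)"
  proof -
    have "(\<lambda>x. norm (f x)) summable_on (UNIV \<times> UNIV)"
      by (rule summable_on_comparison_test[OF ns]) (auto simp: f_def norm_mult)
    then show ?thesis by (rule abs_summable_summable)
  qed
  define S where "S = infsum f (UNIV \<times> UNIV)"
  have fS: "(f has_sum S) (UNIV \<times> UNIV)" unfolding S_def using fs by (rule has_sum_infsum)
  have "((\<lambda>p. A p * ef \<omega> p t * fourier_series \<omega> D t) has_sum S) UNIV"
  proof (rule has_sum_Sigma'[OF fS[unfolded Sigma_def[symmetric]]])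
    show "((\<lambda>q. f (p, q)) has_sum A p * ef \<omega> p t * fourier_series \<omega> D t) UNIV" for p
      unfolding f_def using has_sum_cmult_right[OF fs_has_sum[OF D], of "A p * ef \<omega> p t"] by simp
  qed
  moreover have "((\<lambda>p. A p * ef \<omega> p t * fourier_series \<omega> D t) has_sum fourier_series \<omega> A t * fourier_series \<omega> D t) UNIV"
    by (rule has_sum_cmult_left[OF fs_has_sum[OF A]])
  ultimately have S1: "S = fourier_series \<omega> A t * fourier_series \<omega> D t" using has_sum_unique by blast
  have bij: "bij_betw (\<lambda>(m, q). (m - q, q)) (UNIV \<times> UNIV) (UNIV \<times> (UNIV :: int set))"
    by (rule bij_betw_byWitness[where f'="\<lambda>(p, q). (p + q, q)"]) auto
  define f' where "f' = (\<lambda>x. f ((\<lambda>(m, q). (m - q, q)) x))"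
  have f'S: "(f' has_sum S) (UNIV \<times> UNIV)"
    unfolding f'_def using has_sum_reindex_bij_betw[OF bij, of f S] fS by simp
  have "((\<lambda>m. (\<Sum>\<^sub>\<infinity>q. A (m - q) * D q) * ef \<omega> m t) has_sum S) UNIV"
  proof (rule has_sum_Sigma'[OF f'S[unfolded Sigma_def[symmetric]]])
    fix m
    have sm: "(\<lambda>q. f' (m, q)) summable_on UNIV"
      using summable_on_SigmaD1[of "\<lambda>m q. f' (m, q)" UNIV "\<lambda>_. UNIV" m] has_sum_imp_summable[OF f'S]
      by simp
    have e: "f' (m, q) = A (m - q) * D q * ef \<omega> m t" for q
    proof -
      have "ef \<omega> (m - q) t * ef \<omega> q t = ef \<omega> m t" by (simp add: ef_mult)
      then show ?thesis unfolding f'_def f_def by (simp add: algebra_simps)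
    qed
    have "infsum (\<lambda>q. f' (m, q)) UNIV = (\<Sum>\<^sub>\<infinity>q. A (m - q) * D q) * ef \<omega> m t"
      unfolding e by (rule infsum_cmult_left')
    then show "((\<lambda>q. f' (m, q)) has_sum (\<Sum>\<^sub>\<infinity>q. A (m - q) * D q) * ef \<omega> m t) UNIV"
      using has_sum_infsum[OF sm] by simp
  qed
  then show ?thesis unfolding fs_ef S1 by (simp add: infsumI)
qed



definition vw :: "int \<Rightarrow> real" where "vw m = 1 / (angle_br m)\<^sup>2"
definition wt :: "real \<Rightarrow> int \<Rightarrow> real" where "wt chi m = exp (- chi * \<bar>real_of_int m\<bar>) / (angle_br m)\<^sup>2"

lemma angle_ge1: "angle_br m \<ge> 1"
  unfolding angle_br_def by auto

lemma angle_minus: "angle_br (- m) = angle_br m"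
  unfolding angle_br_def by auto

lemma vw_pos: "vw m > 0" unfolding vw_def using angle_ge1[of m] by simp

lemma wt_pos: "wt chi m > 0" unfolding wt_def using angle_ge1[of m] by simp

lemma wt_le_vw: "chi \<ge> 0 \<Longrightarrow> wt chi m \<le> vw m"
  unfolding wt_def vw_def using angle_ge1[of m]
  by (intro divide_right_mono) (auto simp: mult_nonneg_nonneg)

lemma wt_0: "wt chi 0 = 1" unfolding wt_def angle_br_def by simp

lemma vw_nat_summable: "summable (\<lambda>n. vw (int n))"
proof -
  have s: "summable (\<lambda>n. 4 * inverse (real (Suc n) ^ 2))"
    using inverse_power_summable[of 2, where 'a=real] summable_Suc_iff[of "\<lambda>n. inverse (real n ^ 2)"]
    by (intro summable_mult) simp
  show ?thesis
  proof (rule summable_comparison_test[OF _ s], intro exI allI impI)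
    fix n :: nat assume "n \<ge> 0"
    have "vw (int n) \<le> 4 * inverse (real (Suc n) ^ 2)"
    proof (cases "n = 0")
      case True then show ?thesis by (simp add: vw_def angle_br_def)
    next
      case False
      then have "real (Suc n) \<le> 2 * real n" by simp
      then have "real (Suc n) ^ 2 \<le> (2 * real n) ^ 2" by (intro power_mono) auto
      then have "inverse ((2 * real n) ^ 2) \<le> inverse (real (Suc n) ^ 2)"
        by (intro le_imp_inverse_le) auto
      then show ?thesis using False by (simp add: vw_def angle_br_def power_mult_distrib field_simps)
    qed
    then show "norm (vw (int n)) \<le> 4 * inverse (real (Suc n) ^ 2)"
      using vw_pos[of "int n"] by simp
  qed
qed

lemma vw_summable: "vw summable_on UNIV"
proof -
  have 1: "vw summable_on range int"
  proof -
    have "(vw \<circ> int) summable_on UNIV"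
      using summable_on_UNIV_nonneg_real_iff[of "vw \<circ> int"] vw_nat_summable vw_pos
      by (simp add: less_imp_le o_def)
    then show ?thesis by (subst summable_on_reindex) auto
  qed
  have 2: "vw summable_on range (\<lambda>n. - int (Suc n))"
  proof -
    have e: "(vw \<circ> (\<lambda>n. - int (Suc n))) = (\<lambda>n. vw (int (Suc n)))"
      by (rule ext) (simp add: o_def vw_def angle_br_def)
    have "(vw \<circ> (\<lambda>n. - int (Suc n))) summable_on UNIV"
      unfolding e
      using summable_on_UNIV_nonneg_real_iff[of "\<lambda>n. vw (int (Suc n))"] vw_nat_summable vw_pos
        summable_Suc_iff[of "\<lambda>n. vw (int n)"]
      by (simp add: less_imp_le)
    then show ?thesis by (subst summable_on_reindex) (auto simp: inj_on_def)
  qed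
  have u: "range int \<union> range (\<lambda>n. - int (Suc n)) = UNIV"
  proof -
    have "x \<in> range int \<union> range (\<lambda>n. - int (Suc n))" for x :: int
    proof (cases "x \<ge> 0")
      case True then show ?thesis by (metis UnI1 nonneg_int_cases rangeI)
    next
      case False
      then have "x = - int (Suc (nat (- x - 1)))" by simp
      then show ?thesis by blast
    qed
    then show ?thesis by blast
  qed
  have "vw summable_on (range int \<union> range (\<lambda>n. - int (Suc n)))"
    by (rule summable_on_Un_disjoint[OF 1 2]) auto
  then show ?thesis unfolding u .
qed

lemma wt_conv_pt:
  assumes chi: "chi \<ge> 0"
  shows "wt chi (m - q) * wt chi q \<le> 2 * wt chi m * (vw q + vw (m - q))"
proof -
  define a where "a = angle_br (m - q)"
  define b where "b = angle_br q"
  define c where "c = angle_br m"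
  have a1: "a \<ge> 1" "b \<ge> 1" "c \<ge> 1" unfolding a_def b_def c_def by (simp_all add: angle_ge1)
  have cab: "c \<le> a + b"
  proof (cases "m = 0")
    case True then show ?thesis using a1 unfolding c_def angle_br_def by simp
  next
    case False
    have "\<bar>real_of_int m\<bar> \<le> \<bar>real_of_int (m - q)\<bar> + \<bar>real_of_int q\<bar>" by linarith
    moreover have "\<bar>real_of_int (m - q)\<bar> \<le> a" "\<bar>real_of_int q\<bar> \<le> b"
      unfolding a_def b_def angle_br_def by auto
    ultimately show ?thesis using False unfolding c_def angle_br_def by simp
  qed
  have c2: "c\<^sup>2 \<le> 2 * (a\<^sup>2 + b\<^sup>2)"
  proof -
    have "c\<^sup>2 \<le> (a + b)\<^sup>2" using cab a1 by (intro power_mono) auto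
    also have "\<dots> \<le> 2 * (a\<^sup>2 + b\<^sup>2)" 
    proof -
      have "0 \<le> (a - b) * (a - b)" by simp
      then show ?thesis unfolding power2_eq_square by (simp add: algebra_simps)
    qed
    finally show ?thesis .
  qed
  define E where "E = exp (- chi * \<bar>real_of_int (m - q)\<bar>) * exp (- chi * \<bar>real_of_int q\<bar>)"
  define Em where "Em = exp (- chi * \<bar>real_of_int m\<bar>)"
  have EE: "E \<le> Em"
  proof -
    have "\<bar>real_of_int m\<bar> \<le> \<bar>real_of_int (m - q)\<bar> + \<bar>real_of_int q\<bar>" by linarith
    then have "chi * \<bar>real_of_int m\<bar> \<le> chi * (\<bar>real_of_int (m - q)\<bar> + \<bar>real_of_int q\<bar>)"
      by (rule mult_left_mono[OF _ chi])
    then have "- chi * \<bar>real_of_int (m - q)\<bar> + - chi * \<bar>real_of_int q\<bar> \<le> - chi * \<bar>real_of_int m\<bar>"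
      by (simp only: distrib_left)
    then show ?thesis unfolding E_def Em_def by (simp add: exp_add[symmetric])
  qed
  have E0: "E \<ge> 0" unfolding E_def by simp
  have lhs: "wt chi (m - q) * wt chi q = E / (a\<^sup>2 * b\<^sup>2)"
    unfolding wt_def E_def a_def b_def by simp
  have rhs: "2 * wt chi m * (vw q + vw (m - q)) = 2 * Em * (a\<^sup>2 + b\<^sup>2) / (c\<^sup>2 * a\<^sup>2 * b\<^sup>2)"
    unfolding wt_def vw_def Em_def a_def b_def c_def using a1 
    by (simp add: field_simps a_def b_def c_def)
  have "E * c\<^sup>2 \<le> Em * (2 * (a\<^sup>2 + b\<^sup>2))"
    using EE c2 E0 by (intro mult_mono) auto
  then have "E / (a\<^sup>2 * b\<^sup>2) \<le> 2 * Em * (a\<^sup>2 + b\<^sup>2) / (c\<^sup>2 * a\<^sup>2 * b\<^sup>2)"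
    using a1 by (simp add: field_simps)
  then show ?thesis unfolding lhs rhs .
qed

lemma vw_shift: "(\<lambda>q. vw (m - q)) summable_on UNIV \<and> (\<Sum>\<^sub>\<infinity>q. vw (m - q)) = (\<Sum>\<^sub>\<infinity>q. vw q)"
proof -
  have bij: "bij_betw (\<lambda>q. m - q) UNIV UNIV"
    by (rule bij_betw_byWitness[where f'="\<lambda>q. m - q"]) auto
  show ?thesis
    using summable_on_reindex_bij_betw[OF bij, of vw] infsum_reindex_bij_betw[OF bij, of vw] vw_summable by simp
qed

lemma wt_conv:
  assumes chi: "chi \<ge> 0"
  shows "(\<lambda>q. wt chi (m - q) * wt chi q) summable_on UNIV"
    and "(\<Sum>\<^sub>\<infinity>q. wt chi (m - q) * wt chi q) \<le> 4 * (\<Sum>\<^sub>\<infinity>q. vw q) * wt chi m"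
proof -
  have s2: "(\<lambda>q. 2 * wt chi m * (vw q + vw (m - q))) summable_on UNIV"
    by (intro summable_on_cmult_right summable_on_add vw_summable vw_shift[THEN conjunct1])
  show s1: "(\<lambda>q. wt chi (m - q) * wt chi q) summable_on UNIV"
    by (rule summable_on_comparison_test[OF s2]) (auto simp: wt_conv_pt[OF chi] less_imp_le wt_pos)
  have "(\<Sum>\<^sub>\<infinity>q. wt chi (m - q) * wt chi q) \<le> (\<Sum>\<^sub>\<infinity>q. 2 * wt chi m * (vw q + vw (m - q)))"
    by (rule infsum_mono[OF s1 s2]) (rule wt_conv_pt[OF chi])
  also have "\<dots> = 2 * wt chi m * ((\<Sum>\<^sub>\<infinity>q. vw q) + (\<Sum>\<^sub>\<infinity>q. vw (m - q)))"
    by (simp add: infsum_cmult_right' infsum_add vw_summable vw_shift)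
  also have "\<dots> = 4 * (\<Sum>\<^sub>\<infinity>q. vw q) * wt chi m" using vw_shift[of m] by simp
  finally show "(\<Sum>\<^sub>\<infinity>q. wt chi (m - q) * wt chi q) \<le> 4 * (\<Sum>\<^sub>\<infinity>q. vw q) * wt chi m" .
qed

lemma infsum_norm_le_gen:
  fixes f :: "int \<Rightarrow> complex"
  assumes g: "g summable_on UNIV" and le: "\<And>q. norm (f q) \<le> g q"
  shows "f summable_on UNIV" "norm (\<Sum>\<^sub>\<infinity>q. f q) \<le> (\<Sum>\<^sub>\<infinity>q. g q)"
proof -
  have "(\<lambda>q. norm (f q)) summable_on UNIV"
    by (rule summable_on_comparison_test[OF g]) (use le in auto)
  then show fs: "f summable_on UNIV" by (rule abs_summable_summable)
  show "norm (\<Sum>\<^sub>\<infinity>q. f q) \<le> (\<Sum>\<^sub>\<infinity>q. g q)"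
    by (rule norm_infsum_le[OF has_sum_infsum[OF fs] has_sum_infsum[OF g]]) (use le in auto)
qed



definition good :: "real \<Rightarrow> real \<Rightarrow> (int \<Rightarrow> complex) \<Rightarrow> bool" where
  "good chi \<gamma> C \<longleftrightarrow> (\<forall>m. norm (C m) \<le> \<gamma> * wt chi m)"

definition SV :: real where "SV = (\<Sum>\<^sub>\<infinity>q. vw q)"

lemma SV_nonneg: "SV \<ge> 0"
  unfolding SV_def by (rule infsum_nonneg) (simp add: less_imp_le vw_pos)

lemma good_nonneg: "good chi \<gamma> C \<Longrightarrow> \<gamma> \<ge> 0"
  unfolding good_def using norm_ge_zero[of "C 0"] by (metis order_trans wt_0 mult.right_neutral)

lemma good_mono: "good chi \<gamma> C \<Longrightarrow> \<gamma> \<le> \<gamma>' \<Longrightarrow> good chi \<gamma>' C"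
  unfolding good_def using wt_pos
  by (meson less_imp_le mult_right_mono order_trans)

lemma good_summable:
  assumes chi: "chi \<ge> 0" and g: "good chi \<gamma> C"
  shows "(\<lambda>m. norm (C m)) summable_on UNIV"
proof (rule summable_on_comparison_test[OF summable_on_cmult_right[OF vw_summable, of \<gamma>]])
  fix m
  have "norm (C m) \<le> \<gamma> * wt chi m" using g unfolding good_def by blast
  also have "\<dots> \<le> \<gamma> * vw m" using good_nonneg[OF g] wt_le_vw[OF chi] by (rule mult_left_mono[rotated])
  finally show "norm (C m) \<le> \<gamma> * vw m" .
qed simp

lemma good_infsum:
  assumes chi: "chi \<ge> 0" and g: "good chi \<gamma> C"
  shows "(\<Sum>\<^sub>\<infinity>m. norm (C m)) \<le> \<gamma> * SV"
proof -
  have "(\<Sum>\<^sub>\<infinity>m. norm (C m)) \<le> (\<Sum>\<^sub>\<infinity>m. \<gamma> * vw m)"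
  proof (rule infsum_mono[OF good_summable[OF chi g] summable_on_cmult_right[OF vw_summable]])
    fix m
    have "norm (C m) \<le> \<gamma> * wt chi m" using g unfolding good_def by blast
    also have "\<dots> \<le> \<gamma> * vw m" using good_nonneg[OF g] wt_le_vw[OF chi] by (rule mult_left_mono[rotated])
    finally show "norm (C m) \<le> \<gamma> * vw m" .
  qed
  also have "\<dots> = \<gamma> * SV" unfolding SV_def by (rule infsum_cmult_right') 
  finally show ?thesis .
qed

lemma good_Dco:
  assumes w: "\<omega> > 0" and chi: "chi \<ge> 0" and g: "good chi \<gamma> B"
  shows "good chi (\<gamma> * (1 + SV) / \<omega>) (Dco \<omega> B)"
  unfolding good_def
proof
  fix m
  have g0: "\<gamma> \<ge> 0" by (rule good_nonneg[OF g])
  have wp: "wt chi m > 0" by (rule wt_pos)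
  show "norm (Dco \<omega> B m) \<le> \<gamma> * (1 + SV) / \<omega> * wt chi m"
  proof (cases "m = 0")
    case True
    have "norm (Dco \<omega> B m) = norm (Gs \<omega> B 0)" using True by (simp add: Dco_def)
    also have "\<dots> \<le> (\<Sum>\<^sub>\<infinity>m. norm (B m)) / \<omega>" by (rule Gs_bound[OF w good_summable[OF chi g]])
    also have "\<dots> \<le> \<gamma> * SV / \<omega>" using good_infsum[OF chi g] w by (simp add: divide_right_mono)
    also have "\<dots> \<le> \<gamma> * (1 + SV) / \<omega>" using g0 w by (simp add: divide_right_mono mult_left_mono)
    finally show ?thesis using True by (simp add: wt_0)
  next
    case False
    have "norm (Dco \<omega> B m) \<le> norm (B m) / \<omega>"
      using Gcoef_bound[OF w, of m B] False by (simp add: Dco_def)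
    also have "\<dots> \<le> \<gamma> * wt chi m / \<omega>" using g w unfolding good_def by (simp add: divide_right_mono)
    also have "\<dots> \<le> \<gamma> * (1 + SV) / \<omega> * wt chi m"
    proof -
      have "\<gamma> * wt chi m * 1 \<le> \<gamma> * wt chi m * (1 + SV)"
        by (rule mult_left_mono) (use g0 wp SV_nonneg in auto)
      then have "\<gamma> * wt chi m \<le> \<gamma> * (1 + SV) * wt chi m" by (simp add: algebra_simps)
      then show ?thesis using w by (simp add: divide_right_mono field_simps)
    qed
    finally show ?thesis .
  qed
qed

lemma good_conv:
  assumes chi: "chi \<ge> 0" and gA: "good chi \<alpha> A" and gD: "good chi \<gamma> D"
  shows "good chi (\<alpha> * \<gamma> * (4 * SV)) (\<lambda>m. \<Sum>\<^sub>\<infinity>q. A (m - q) * D q)"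
  unfolding good_def
proof
  fix m
  have a0: "\<alpha> \<ge> 0" by (rule good_nonneg[OF gA])
  have g0: "\<gamma> \<ge> 0" by (rule good_nonneg[OF gD])
  have le: "norm (A (m - q) * D q) \<le> \<alpha> * \<gamma> * (wt chi (m - q) * wt chi q)" for q
  proof -
    have "norm (A (m - q) * D q) = norm (A (m - q)) * norm (D q)" by (simp add: norm_mult)
    also have "\<dots> \<le> (\<alpha> * wt chi (m - q)) * (\<gamma> * wt chi q)"
      using gA gD a0 wt_pos[of chi "m - q"] unfolding good_def by (intro mult_mono) (auto simp: less_imp_le)
    finally show ?thesis by (simp add: algebra_simps)
  qed
  have s: "(\<lambda>q. \<alpha> * \<gamma> * (wt chi (m - q) * wt chi q)) summable_on UNIV"
    by (rule summable_on_cmult_right[OF wt_conv(1)[OF chi]])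
  have "norm (\<Sum>\<^sub>\<infinity>q. A (m - q) * D q) \<le> (\<Sum>\<^sub>\<infinity>q. \<alpha> * \<gamma> * (wt chi (m - q) * wt chi q))"
    by (rule infsum_norm_le_gen(2)[OF s le])
  also have "\<dots> = \<alpha> * \<gamma> * (\<Sum>\<^sub>\<infinity>q. wt chi (m - q) * wt chi q)" by (rule infsum_cmult_right')
  also have "\<dots> \<le> \<alpha> * \<gamma> * (4 * SV * wt chi m)"
    using wt_conv(2)[OF chi, of m] a0 g0 unfolding SV_def by (simp add: mult_left_mono)
  finally show "norm (\<Sum>\<^sub>\<infinity>q. A (m - q) * D q) \<le> \<alpha> * \<gamma> * (4 * SV) * wt chi m" by (simp add: algebra_simps)
qed

definition Kc :: "real \<Rightarrow> real" where "Kc \<omega> = 4 * SV * (1 + SV) / \<omega>"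

lemma step:
  assumes w: "\<omega> > 0" and chi: "chi \<ge> 0" and gA: "good chi \<alpha> A" and gB: "good chi \<gamma> B"
  shows "\<exists>C. (\<lambda>t. fourier_series \<omega> A t * oint 0 t (\<lambda>\<tau>. fourier_series \<omega> B \<tau> - mean_val (fourier_series \<omega> B)))
            = fourier_series \<omega> C \<and> good chi (Kc \<omega> * \<alpha> * \<gamma>) C"
proof (intro exI conjI)
  have Bs: "(\<lambda>m. norm (B m)) summable_on UNIV" by (rule good_summable[OF chi gB])
  have gD: "good chi (\<gamma> * (1 + SV) / \<omega>) (Dco \<omega> B)" by (rule good_Dco[OF w chi gB])
  show "(\<lambda>t. fourier_series \<omega> A t * oint 0 t (\<lambda>\<tau>. fourier_series \<omega> B \<tau> - mean_val (fourier_series \<omega> B)))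
            = fourier_series \<omega> (\<lambda>m. \<Sum>\<^sub>\<infinity>q. A (m - q) * Dco \<omega> B q)"
  proof
    fix t
    show "fourier_series \<omega> A t * oint 0 t (\<lambda>\<tau>. fourier_series \<omega> B \<tau> - mean_val (fourier_series \<omega> B))
        = fourier_series \<omega> (\<lambda>m. \<Sum>\<^sub>\<infinity>q. A (m - q) * Dco \<omega> B q) t"
      unfolding fs_mean[OF w Bs] fs_oint[OF w Bs] Dco_fs[OF w Bs, symmetric]
      by (rule fs_mult[OF good_summable[OF chi gA] good_summable[OF chi gD]])
  qed
  show "good chi (Kc \<omega> * \<alpha> * \<gamma>) (\<lambda>m. \<Sum>\<^sub>\<infinity>q. A (m - q) * Dco \<omega> B q)"
    using good_conv[OF chi gA gD] by (simp add: Kc_def field_simps)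
qed



lemma renorm_cons: "L \<noteq> [] \<Longrightarrow> renorm (a # L) = (\<lambda>t. a t * oint 0 t (\<lambda>\<tau>. renorm L \<tau> - mean_val (renorm L)))"
  by (cases L) auto

lemma main_ind:
  assumes w: "\<omega> > 0" and chi: "chi \<ge> 0"
  shows "\<forall>s. (\<forall>l\<in>{s..<s + Suc n}. good chi (\<alpha> l) (A l)) \<longrightarrow>
           (\<exists>C. renorm (map (\<lambda>l. fourier_series \<omega> (A l)) [s..<s + Suc n]) = fourier_series \<omega> C
               \<and> good chi (Kc \<omega> ^ n * (\<Prod>l\<in>{s..<s + Suc n}. \<alpha> l)) C)"
proof (induction n)
  case 0
  show ?case
  proof (intro allI impI)
    fix s assume h: "\<forall>l\<in>{s..<s + Suc 0}. good chi (\<alpha> l) (A l)"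
    then have "good chi (\<alpha> s) (A s)" by simp
    then show "\<exists>C. renorm (map (\<lambda>l. fourier_series \<omega> (A l)) [s..<s + Suc 0]) = fourier_series \<omega> C
               \<and> good chi (Kc \<omega> ^ 0 * (\<Prod>l\<in>{s..<s + Suc 0}. \<alpha> l)) C"
      by (intro exI[of _ "A s"]) simp
  qed
next
  case (Suc n)
  show ?case
  proof (intro allI impI)
    fix s assume h: "\<forall>l\<in>{s..<s + Suc (Suc n)}. good chi (\<alpha> l) (A l)"
    have h1: "\<forall>l\<in>{Suc s..<Suc s + Suc n}. good chi (\<alpha> l) (A l)" using h by auto
    obtain C' where C': "renorm (map (\<lambda>l. fourier_series \<omega> (A l)) [Suc s..<Suc s + Suc n]) = fourier_series \<omega> C'"
      and gC': "good chi (Kc \<omega> ^ n * (\<Prod>l\<in>{Suc s..<Suc s + Suc n}. \<alpha> l)) C'"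
      using Suc.IH h1 by blast
    have gA: "good chi (\<alpha> s) (A s)" using h by simp
    have ups: "[s..<s + Suc (Suc n)] = s # [Suc s..<Suc s + Suc n]"
      by (simp add: upt_conv_Cons)
    have ne: "map (\<lambda>l. fourier_series \<omega> (A l)) [Suc s..<Suc s + Suc n] \<noteq> []" by simp
    obtain C where C: "(\<lambda>t. fourier_series \<omega> (A s) t * oint 0 t (\<lambda>\<tau>. fourier_series \<omega> C' \<tau> - mean_val (fourier_series \<omega> C')))
            = fourier_series \<omega> C"
      and gC: "good chi (Kc \<omega> * \<alpha> s * (Kc \<omega> ^ n * (\<Prod>l\<in>{Suc s..<Suc s + Suc n}. \<alpha> l))) C"
      using step[OF w chi gA gC'] by blast
    have pr: "(\<Prod>l\<in>{s..<s + Suc (Suc n)}. \<alpha> l) = \<alpha> s * (\<Prod>l\<in>{Suc s..<Suc s + Suc n}. \<alpha> l)"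
      by (simp add: prod.atLeast_Suc_lessThan)
    show "\<exists>C. renorm (map (\<lambda>l. fourier_series \<omega> (A l)) [s..<s + Suc (Suc n)]) = fourier_series \<omega> C
               \<and> good chi (Kc \<omega> ^ Suc n * (\<Prod>l\<in>{s..<s + Suc (Suc n)}. \<alpha> l)) C"
    proof (intro exI conjI)
      show "renorm (map (\<lambda>l. fourier_series \<omega> (A l)) [s..<s + Suc (Suc n)]) = fourier_series \<omega> C"
        unfolding ups list.map renorm_cons[OF ne] C' by (rule C)
      show "good chi (Kc \<omega> ^ Suc n * (\<Prod>l\<in>{s..<s + Suc (Suc n)}. \<alpha> l)) C"
        using gC unfolding pr by (simp add: algebra_simps)
    qed
  qed
qed

theorem propositionB2:
  fixes k :: nat and \<omega> chi :: real
  assumes "k \<ge> 2" and "\<omega> > 0" and "chi > 0"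
  shows "\<exists>\<beta>::real. \<beta> > 0 \<and> ( \<forall>(A :: nat \<Rightarrow> int \<Rightarrow> complex) (\<alpha> :: nat \<Rightarrow> real).
           (\<forall>l\<in>{1..k}. \<alpha> l > 0) \<and>
           (\<forall>l\<in>{1..k}. \<forall>m. norm (A l m) \<le> \<alpha> l * exp (- chi * \<bar>real_of_int m\<bar>) / (angle_br m)\<^sup>2)
           \<longrightarrow> (\<forall>m. norm (fourier_coeff \<omega> (renorm (map (\<lambda>l. fourier_series \<omega> (A l)) [1..<k+1])) m)
                  \<le> \<beta> * (\<Prod>l=1..k. \<alpha> l) * exp (- chi * \<bar>real_of_int m\<bar>) / (angle_br m)\<^sup>2))"
proof -
  have w: "\<omega> > 0" and chi: "chi \<ge> 0" using assms by auto
  have "sum vw {0} \<le> SV" unfolding SV_def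
    by (rule finite_sum_le_infsum[OF vw_summable]) (auto simp: less_imp_le vw_pos)
  then have "SV > 0" using vw_pos[of 0] by simp
  then have Kp: "Kc \<omega> > 0" unfolding Kc_def using w by simp
  show ?thesis
  proof (intro exI[of _ "Kc \<omega> ^ (k - 1)"] conjI allI impI)
    show "Kc \<omega> ^ (k - 1) > 0" using Kp by simp
    fix A :: "nat \<Rightarrow> int \<Rightarrow> complex" and \<alpha> :: "nat \<Rightarrow> real" and m :: int
    assume h: "(\<forall>l\<in>{1..k}. \<alpha> l > 0) \<and>
           (\<forall>l\<in>{1..k}. \<forall>m. norm (A l m) \<le> \<alpha> l * exp (- chi * \<bar>real_of_int m\<bar>) / (angle_br m)\<^sup>2)"
    have kk: "1 + Suc (k - 1) = k + 1" using assms(1) by simp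
    have g: "\<forall>l\<in>{1..<1 + Suc (k - 1)}. good chi (\<alpha> l) (A l)"
      using h unfolding kk good_def wt_def by (auto simp: times_divide_eq_right)
    obtain C where C: "renorm (map (\<lambda>l. fourier_series \<omega> (A l)) [1..<k+1]) = fourier_series \<omega> C"
      and gC: "good chi (Kc \<omega> ^ (k - 1) * (\<Prod>l\<in>{1..<k+1}. \<alpha> l)) C"
      using spec[OF main_ind[OF w chi, of "k - 1" \<alpha> A], of 1] g unfolding kk by blast
    have pr: "{1..<k+1} = {1..k}" by auto
    have "norm (fourier_coeff \<omega> (renorm (map (\<lambda>l. fourier_series \<omega> (A l)) [1..<k+1])) m) = norm (C m)"
      unfolding C fs_coeff[OF w good_summable[OF chi gC]] ..
    also have "\<dots> \<le> Kc \<omega> ^ (k - 1) * (\<Prod>l=1..k. \<alpha> l) * wt chi m"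
      using gC unfolding good_def pr by blast
    finally show "norm (fourier_coeff \<omega> (renorm (map (\<lambda>l. fourier_series \<omega> (A l)) [1..<k+1])) m)
                  \<le> Kc \<omega> ^ (k - 1) * (\<Prod>l=1..k. \<alpha> l) * exp (- chi * \<bar>real_of_int m\<bar>) / (angle_br m)\<^sup>2"
      unfolding wt_def by (simp add: times_divide_eq_right)
  qed
qed

end
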